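(* Let $X_1,\dots,X_n$ be independent random variables, each symmetric about $0$. If $|X_k|\le_{\mathrm{st}}|X_l|$ for some pair $1\le k<l\le n$, then $$|\max(X_i\mid 1\le i\le n,\ i\ne l)|\le_{\mathrm{st}}|\max(X_i\mid 1\le i\le n)|,$$ $$|\min(X_i\mid 1\le i\le n,\ i\ne l)|\le_{\mathrm{st}}|\min(X_i\mid 1\le i\le n)|,$$ and if $|X_k|<_{\mathrm{st}}|X_l|$ both stochastic inequalities are strict. Consequently, if $|X_1|\le_{\mathrm{st}}\cdots\le_{\mathrm{st}}|X_n|$ then $(X_1,\dots,X_n)$ is SIAMX and SIAMN, and if $|X_1|<_{\mathrm{st}}\cdots<_{\mathrm{st}}|X_n|$ then $(X_1,\dots,X_n)$ is SSIAMX and SSIAMN.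
   Context: For random variables $U,V$, $U\le_{\mathrm{st}}V$ means $F_U(x)\ge F_V(x)$ for all real $x$ ($F$ the cdf), and $U<_{\mathrm{st}}V$ means additionally strict inequality for at least one $x$. $(X_1,\dots,X_n)$ is SIAMX if $|\max(X_1,\dots,X_{l-1})|\le_{\mathrm{st}}|\max(X_1,\dots,X_l)|$ for $l=2,\dots,n$ (with $\max(X_1)=X_1$), and SSIAMX if all these inequalities are strict; SIAMN and SSIAMN are the same with $\max$ replaced by $\min$. *)

theory Defs
  imports "HOL-Probability.Probability"
begin

definition stoch_le :: "'a measure \<Rightarrow> ('a \<Rightarrow> real) \<Rightarrow> ('a \<Rightarrow> real) \<Rightarrow> bool" where
  "stoch_le M U V \<longleftrightarrow>
     (\<forall>x::real. measure M {\<omega>\<in>space M. V \<omega> \<le> x} \<le> measure M {\<omega>\<in>space M. U \<omega> \<le> x})"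

definition stoch_lt :: "'a measure \<Rightarrow> ('a \<Rightarrow> real) \<Rightarrow> ('a \<Rightarrow> real) \<Rightarrow> bool" where
  "stoch_lt M U V \<longleftrightarrow> stoch_le M U V \<and>
     (\<exists>x::real. measure M {\<omega>\<in>space M. V \<omega> \<le> x} < measure M {\<omega>\<in>space M. U \<omega> \<le> x})"

definition abs_max :: "(nat \<Rightarrow> 'a \<Rightarrow> real) \<Rightarrow> nat set \<Rightarrow> 'a \<Rightarrow> real" where
  "abs_max X I = (\<lambda>\<omega>. \<bar>Max ((\<lambda>i. X i \<omega>) ` I)\<bar>)"

definition abs_min :: "(nat \<Rightarrow> 'a \<Rightarrow> real) \<Rightarrow> nat set \<Rightarrow> 'a \<Rightarrow> real" where
  "abs_min X I = (\<lambda>\<omega>. \<bar>Min ((\<lambda>i. X i \<omega>) ` I)\<bar>)"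

definition SIAMX :: "'a measure \<Rightarrow> (nat \<Rightarrow> 'a \<Rightarrow> real) \<Rightarrow> nat \<Rightarrow> bool" where
  "SIAMX M X n \<longleftrightarrow> (\<forall>l\<in>{2..n}. stoch_le M (abs_max X {1..l-1}) (abs_max X {1..l}))"

definition SSIAMX :: "'a measure \<Rightarrow> (nat \<Rightarrow> 'a \<Rightarrow> real) \<Rightarrow> nat \<Rightarrow> bool" where
  "SSIAMX M X n \<longleftrightarrow> (\<forall>l\<in>{2..n}. stoch_lt M (abs_max X {1..l-1}) (abs_max X {1..l}))"

definition SIAMN :: "'a measure \<Rightarrow> (nat \<Rightarrow> 'a \<Rightarrow> real) \<Rightarrow> nat \<Rightarrow> bool" where
  "SIAMN M X n \<longleftrightarrow> (\<forall>l\<in>{2..n}. stoch_le M (abs_min X {1..l-1}) (abs_min X {1..l}))"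

definition SSIAMN :: "'a measure \<Rightarrow> (nat \<Rightarrow> 'a \<Rightarrow> real) \<Rightarrow> nat \<Rightarrow> bool" where
  "SSIAMN M X n \<longleftrightarrow> (\<forall>l\<in>{2..n}. stoch_lt M (abs_min X {1..l-1}) (abs_min X {1..l}))"

end

theory Submission imports Defs begin
context prob_space begin
lemma sym_le:
  fixes X :: "'a \<Rightarrow> real"
  assumes rv: "X \<in> borel_measurable M" and s: "distr M borel X = distr M borel (\<lambda>\<omega>. - X \<omega>)"
  shows "prob {\<omega>\<in>space M. - x \<le> X \<omega>} = prob {\<omega>\<in>space M. X \<omega> \<le> x}"
proof -
  have "prob {\<omega>\<in>space M. X \<omega> \<le> x} = measure (distr M borel X) {..x}"
    using rv by (subst measure_distr) (auto intro!: arg_cong[where f=prob])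
  also have "\<dots> = measure (distr M borel (\<lambda>\<omega>. - X \<omega>)) {..x}" using s by simp
  also have "\<dots> = prob {\<omega>\<in>space M. - x \<le> X \<omega>}"
    using rv by (subst measure_distr) (auto intro!: arg_cong[where f=prob])
  finally show ?thesis by simp
qed

lemma prob_less_neg:
  fixes X :: "'a \<Rightarrow> real"
  assumes rv: "X \<in> borel_measurable M" and s: "distr M borel X = distr M borel (\<lambda>\<omega>. - X \<omega>)"
  shows "prob {\<omega>\<in>space M. X \<omega> < - x} = 1 - prob {\<omega>\<in>space M. X \<omega> \<le> x}"
proof -
  have "{\<omega>\<in>space M. X \<omega> < - x} = space M - {\<omega>\<in>space M. - x \<le> X \<omega>}" by auto
  then have "prob {\<omega>\<in>space M. X \<omega> < - x} = 1 - prob {\<omega>\<in>space M. - x \<le> X \<omega>}"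
    using rv by (simp add: prob_compl)
  then show ?thesis using sym_le[OF rv s] by simp
qed

lemma prob_greater:
  fixes X :: "'a \<Rightarrow> real"
  assumes rv: "X \<in> borel_measurable M"
  shows "prob {\<omega>\<in>space M. x < X \<omega>} = 1 - prob {\<omega>\<in>space M. X \<omega> \<le> x}"
proof -
  have "{\<omega>\<in>space M. x < X \<omega>} = space M - {\<omega>\<in>space M. X \<omega> \<le> x}" by auto
  then show ?thesis using rv by (simp add: prob_compl)
qed

lemma indep_prod:
  assumes ind: "indep_vars (\<lambda>_. borel) X I" and J: "finite J" "J \<subseteq> I"
    and A: "\<And>i. i \<in> J \<Longrightarrow> A i \<in> sets borel"
  shows "prob {\<omega>\<in>space M. \<forall>i\<in>J. X i \<omega> \<in> A i} = (\<Prod>i\<in>J. prob {\<omega>\<in>space M. X i \<omega> \<in> A i})"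
proof (cases "J = {}")
  case True then show ?thesis by (simp add: prob_space)
next
  case False
  have "{\<omega>\<in>space M. \<forall>i\<in>J. X i \<omega> \<in> A i} = (\<Inter>i\<in>J. X i -` A i \<inter> space M)"
    using False by auto
  moreover have "\<And>i. {\<omega>\<in>space M. X i \<omega> \<in> A i} = X i -` A i \<inter> space M" by auto
  ultimately show ?thesis using indep_varsD[OF ind False J(1) J(2) A] by simp
qed

lemma abs_max_formula:
  fixes X :: "nat \<Rightarrow> 'a \<Rightarrow> real"
  assumes ind: "indep_vars (\<lambda>_. borel) X I" and J: "finite J" "J \<subseteq> I" "J \<noteq> {}"
    and s: "\<And>i. i \<in> I \<Longrightarrow> distr M borel (X i) = distr M borel (\<lambda>\<omega>. - X i \<omega>)"
    and x: "0 \<le> x"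
  shows "prob {\<omega>\<in>space M. \<bar>Max ((\<lambda>i. X i \<omega>) ` J)\<bar> \<le> x}
     = (\<Prod>i\<in>J. prob {\<omega>\<in>space M. X i \<omega> \<le> x}) - (\<Prod>i\<in>J. 1 - prob {\<omega>\<in>space M. X i \<omega> \<le> x})"
proof -
  have rv: "\<And>i. i \<in> J \<Longrightarrow> X i \<in> borel_measurable M" using ind J unfolding indep_vars_def by auto
  let ?A = "{\<omega>\<in>space M. \<forall>i\<in>J. X i \<omega> \<in> {..x}}"
  let ?B = "{\<omega>\<in>space M. \<forall>i\<in>J. X i \<omega> \<in> {..< -x}}"
  have eq: "{\<omega>\<in>space M. \<bar>Max ((\<lambda>i. X i \<omega>) ` J)\<bar> \<le> x} = ?A - ?B"
  proof -
    have a: "\<bar>m\<bar> \<le> x \<longleftrightarrow> m \<le> x \<and> \<not> m < -x" for m :: real by auto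
    show ?thesis using J x unfolding a by (auto simp: Max_le_iff Max_less_iff)
  qed
  have mA: "?A \<in> sets M" using rv J(1) by measurable
  have mB: "?B \<in> sets M" using rv J(1) by measurable
  have sub: "?B \<subseteq> ?A" using x by auto
  have pA: "prob ?A = (\<Prod>i\<in>J. prob {\<omega>\<in>space M. X i \<omega> \<le> x})"
    using indep_prod[OF ind J(1,2), of "\<lambda>_. {..x}"] by simp
  have pB: "prob ?B = (\<Prod>i\<in>J. 1 - prob {\<omega>\<in>space M. X i \<omega> \<le> x})"
    using indep_prod[OF ind J(1,2), of "\<lambda>_. {..< -x}"] J(2)
    by (simp add: prob_less_neg[OF rv s] subset_iff cong: prod.cong)
  show ?thesis unfolding eq finite_measure_Diff[OF mA mB sub] pA pB ..
qed

lemma abs_min_formula: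
  fixes X :: "nat \<Rightarrow> 'a \<Rightarrow> real"
  assumes ind: "indep_vars (\<lambda>_. borel) X I" and J: "finite J" "J \<subseteq> I" "J \<noteq> {}"
    and s: "\<And>i. i \<in> I \<Longrightarrow> distr M borel (X i) = distr M borel (\<lambda>\<omega>. - X i \<omega>)"
    and x: "0 \<le> x"
  shows "prob {\<omega>\<in>space M. \<bar>Min ((\<lambda>i. X i \<omega>) ` J)\<bar> \<le> x}
     = (\<Prod>i\<in>J. prob {\<omega>\<in>space M. X i \<omega> \<le> x}) - (\<Prod>i\<in>J. 1 - prob {\<omega>\<in>space M. X i \<omega> \<le> x})"
proof -
  have rv: "\<And>i. i \<in> J \<Longrightarrow> X i \<in> borel_measurable M" using ind J unfolding indep_vars_def by auto
  let ?A = "{\<omega>\<in>space M. \<forall>i\<in>J. X i \<omega> \<in> {-x..}}"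
  let ?B = "{\<omega>\<in>space M. \<forall>i\<in>J. X i \<omega> \<in> {x<..}}"
  have eq: "{\<omega>\<in>space M. \<bar>Min ((\<lambda>i. X i \<omega>) ` J)\<bar> \<le> x} = ?A - ?B"
  proof -
    have a: "\<bar>m\<bar> \<le> x \<longleftrightarrow> -x \<le> m \<and> \<not> x < m" for m :: real by auto
    show ?thesis using J x unfolding a by (auto simp: Min_ge_iff Min_gr_iff)
  qed
  have mA: "?A \<in> sets M" using rv J(1) by measurable
  have mB: "?B \<in> sets M" using rv J(1) by measurable
  have sub: "?B \<subseteq> ?A" using x by auto
  have pA: "prob ?A = (\<Prod>i\<in>J. prob {\<omega>\<in>space M. X i \<omega> \<le> x})"
    using indep_prod[OF ind J(1,2), of "\<lambda>_. {-x..}"] J(2)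
    by (simp add: sym_le[OF rv s] subset_iff cong: prod.cong)
  have pB: "prob ?B = (\<Prod>i\<in>J. 1 - prob {\<omega>\<in>space M. X i \<omega> \<le> x})"
    using indep_prod[OF ind J(1,2), of "\<lambda>_. {x<..}"] J(2)
    by (simp add: prob_greater[OF rv] subset_iff cong: prod.cong)
  show ?thesis unfolding eq finite_measure_Diff[OF mA mB sub] pA pB ..
qed
end

lemma alg:
  fixes F :: "nat \<Rightarrow> real"
  assumes I: "finite I" "k \<in> I" "l \<in> I" "k \<noteq> l"
    and F: "\<And>i. i \<in> I \<Longrightarrow> 1/2 \<le> F i \<and> F i \<le> 1" and kl: "F l \<le> F k"
  shows "(\<Prod>i\<in>I. F i) - (\<Prod>i\<in>I. 1 - F i) \<le> (\<Prod>i\<in>I-{l}. F i) - (\<Prod>i\<in>I-{l}. 1 - F i)"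
    and "F l < F k \<Longrightarrow> (\<Prod>i\<in>I. F i) - (\<Prod>i\<in>I. 1 - F i) < (\<Prod>i\<in>I-{l}. F i) - (\<Prod>i\<in>I-{l}. 1 - F i)"
proof -
  define J where "J = I - {l} - {k}"
  define Q where "Q = (\<Prod>i\<in>J. F i)"
  define R where "R = (\<Prod>i\<in>J. 1 - F i)"
  have fJ: "finite J" using I by (simp add: J_def)
  have Q0: "Q > 0" unfolding Q_def using F by (intro prod_pos) (force simp: J_def)
  have R0: "0 \<le> R" unfolding R_def using F by (intro prod_nonneg) (force simp: J_def)
  have RQ: "R \<le> Q" unfolding R_def Q_def using F by (intro prod_mono) (force simp: J_def)
  have k': "k \<in> I - {l}" using I by auto
  have e1: "(\<Prod>i\<in>I. G i) = G l * (G k * (\<Prod>i\<in>J. G i))" for G :: "nat \<Rightarrow> real"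
    using prod.remove[OF I(1) I(3), of G] prod.remove[of "I-{l}" k G] I k' by (simp add: J_def)
  have e2: "(\<Prod>i\<in>I-{l}. G i) = G k * (\<Prod>i\<in>J. G i)" for G :: "nat \<Rightarrow> real"
    using prod.remove[of "I-{l}" k G] I k' by (simp add: J_def)
  have Fk: "1/2 \<le> F k" "F k \<le> 1" "1/2 \<le> F l" "F l \<le> 1" using F I by auto
  have key: "Q * (F k - F l) \<le> Q * F k * (1 - F l) - R * (1 - F k) * F l"
  proof -
    have "R * ((1 - F k) * F l) \<le> Q * ((1 - F k) * F l)"
      using RQ Fk by (intro mult_right_mono) auto
    then show ?thesis by (simp add: algebra_simps)
  qed
  have diff: "((\<Prod>i\<in>I-{l}. F i) - (\<Prod>i\<in>I-{l}. 1 - F i)) - ((\<Prod>i\<in>I. F i) - (\<Prod>i\<in>I. 1 - F i))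
     = Q * F k * (1 - F l) - R * (1 - F k) * F l"
    unfolding e1 e2 Q_def[symmetric] R_def[symmetric] by (simp add: algebra_simps)
  have "0 \<le> Q * (F k - F l)" using Q0 kl by simp
  then show "(\<Prod>i\<in>I. F i) - (\<Prod>i\<in>I. 1 - F i) \<le> (\<Prod>i\<in>I-{l}. F i) - (\<Prod>i\<in>I-{l}. 1 - F i)"
    using key diff by linarith
  assume "F l < F k"
  then have "0 < Q * (F k - F l)" using Q0 by simp
  then show "(\<Prod>i\<in>I. F i) - (\<Prod>i\<in>I. 1 - F i) < (\<Prod>i\<in>I-{l}. F i) - (\<Prod>i\<in>I-{l}. 1 - F i)"
    using key diff by linarith
qed

context prob_space begin
lemma core:
  fixes X :: "nat \<Rightarrow> 'a \<Rightarrow> real"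
  assumes ind: "indep_vars (\<lambda>_. borel) X I" and I: "finite I" "k \<in> I" "l \<in> I" "k \<noteq> l"
    and s: "\<And>i. i \<in> I \<Longrightarrow> distr M borel (X i) = distr M borel (\<lambda>\<omega>. - X i \<omega>)"
  shows "stoch_le M (\<lambda>\<omega>. \<bar>X k \<omega>\<bar>) (\<lambda>\<omega>. \<bar>X l \<omega>\<bar>) \<Longrightarrow>
      stoch_le M (abs_max X (I - {l})) (abs_max X I) \<and> stoch_le M (abs_min X (I - {l})) (abs_min X I)"
    and "stoch_lt M (\<lambda>\<omega>. \<bar>X k \<omega>\<bar>) (\<lambda>\<omega>. \<bar>X l \<omega>\<bar>) \<Longrightarrow>
      stoch_lt M (abs_max X (I - {l})) (abs_max X I) \<and> stoch_lt M (abs_min X (I - {l})) (abs_min X I)"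
proof -
  define F where "F x i = prob {\<omega>\<in>space M. X i \<omega> \<le> x}" for x i
  have rv: "\<And>i. i \<in> I \<Longrightarrow> X i \<in> borel_measurable M" using ind unfolding indep_vars_def by auto
  have Fb: "1/2 \<le> F x i \<and> F x i \<le> 1" if "i \<in> I" "0 \<le> x" for i x
  proof -
    have "prob {\<omega>\<in>space M. X i \<omega> < - x} \<le> F x i" unfolding F_def
      using rv[OF that(1)] that(2) by (intro finite_measure_mono) auto
    then show ?thesis using prob_less_neg[OF rv[OF that(1)] s[OF that(1)], of x] by (simp add: F_def)
  qed
  have In: "I \<noteq> {}" using I by auto
  have J1: "finite (I - {l})" "I - {l} \<subseteq> I" "I - {l} \<noteq> {}" using I by auto
  have fmax: "prob {\<omega>\<in>space M. abs_max X J \<omega> \<le> x} = (\<Prod>i\<in>J. F x i) - (\<Prod>i\<in>J. 1 - F x i)"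
    if "finite J" "J \<subseteq> I" "J \<noteq> {}" "0 \<le> x" for J x
    unfolding abs_max_def F_def using abs_max_formula[OF ind that(1-3) s that(4)] by simp
  have fmin: "prob {\<omega>\<in>space M. abs_min X J \<omega> \<le> x} = (\<Prod>i\<in>J. F x i) - (\<Prod>i\<in>J. 1 - F x i)"
    if "finite J" "J \<subseteq> I" "J \<noteq> {}" "0 \<le> x" for J x
    unfolding abs_min_def F_def using abs_min_formula[OF ind that(1-3) s that(4)] by simp
  have fone: "prob {\<omega>\<in>space M. \<bar>X i \<omega>\<bar> \<le> x} = F x i - (1 - F x i)" if "i \<in> I" "0 \<le> x" for i x
    using fmax[of "{i}" x] that by (simp add: abs_max_def)
  have neg: "{\<omega>\<in>space M. abs_max X J \<omega> \<le> x} = {}" "{\<omega>\<in>space M. abs_min X J \<omega> \<le> x} = {}"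
    if "x < 0" for J x using that by (auto simp: abs_max_def abs_min_def)
  have step: "prob {\<omega>\<in>space M. abs_max X I \<omega> \<le> x} \<le> prob {\<omega>\<in>space M. abs_max X (I-{l}) \<omega> \<le> x}
     \<and> prob {\<omega>\<in>space M. abs_min X I \<omega> \<le> x} \<le> prob {\<omega>\<in>space M. abs_min X (I-{l}) \<omega> \<le> x}"
    if le: "prob {\<omega>\<in>space M. \<bar>X l \<omega>\<bar> \<le> x} \<le> prob {\<omega>\<in>space M. \<bar>X k \<omega>\<bar> \<le> x}" for x
  proof (cases "x < 0")
    case True then show ?thesis by (simp add: neg)
  next
    case False
    then have x: "0 \<le> x" by simp
    have "F x l \<le> F x k" using le fone[OF I(2) x] fone[OF I(3) x] by simp
    from alg(1)[OF I, of "F x", OF _ this] Fb[OF _ x]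
    show ?thesis using fmax[OF J1 x] fmin[OF J1 x] fmax[OF I(1) order_refl In x] fmin[OF I(1) order_refl In x] I
      by auto
  qed
  have stepS: "prob {\<omega>\<in>space M. abs_max X I \<omega> \<le> x} < prob {\<omega>\<in>space M. abs_max X (I-{l}) \<omega> \<le> x}
     \<and> prob {\<omega>\<in>space M. abs_min X I \<omega> \<le> x} < prob {\<omega>\<in>space M. abs_min X (I-{l}) \<omega> \<le> x}"
    if le: "prob {\<omega>\<in>space M. \<bar>X l \<omega>\<bar> \<le> x} < prob {\<omega>\<in>space M. \<bar>X k \<omega>\<bar> \<le> x}" for x
  proof (cases "x < 0")
    case True
    then have "{\<omega>\<in>space M. \<bar>X l \<omega>\<bar> \<le> x} = {}" "{\<omega>\<in>space M. \<bar>X k \<omega>\<bar> \<le> x} = {}" by auto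
    then show ?thesis using le by (simp only:)
  next
    case False
    then have x: "0 \<le> x" by simp
    have lk: "F x l < F x k" using le fone[OF I(2) x] fone[OF I(3) x] by simp
    then have "F x l \<le> F x k" by simp
    from alg(2)[OF I, of "F x", OF _ this lk] Fb[OF _ x]
    show ?thesis using fmax[OF J1 x] fmin[OF J1 x] fmax[OF I(1) order_refl In x] fmin[OF I(1) order_refl In x] I
      by auto
  qed
  show "stoch_le M (\<lambda>\<omega>. \<bar>X k \<omega>\<bar>) (\<lambda>\<omega>. \<bar>X l \<omega>\<bar>) \<Longrightarrow>
      stoch_le M (abs_max X (I - {l})) (abs_max X I) \<and> stoch_le M (abs_min X (I - {l})) (abs_min X I)"
    unfolding stoch_le_def using step by blast
  show "stoch_lt M (\<lambda>\<omega>. \<bar>X k \<omega>\<bar>) (\<lambda>\<omega>. \<bar>X l \<omega>\<bar>) \<Longrightarrow>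
      stoch_lt M (abs_max X (I - {l})) (abs_max X I) \<and> stoch_lt M (abs_min X (I - {l})) (abs_min X I)"
    unfolding stoch_lt_def stoch_le_def using step stepS by blast
qed
end
theorem theorem5p2:
  fixes M :: "'a measure" and X :: "nat \<Rightarrow> 'a \<Rightarrow> real" and n :: nat
  assumes "prob_space M"
    and indep: "prob_space.indep_vars M (\<lambda>_. borel) X {1..n}"
    and symm: "\<And>i. i \<in> {1..n} \<Longrightarrow> distr M borel (X i) = distr M borel (\<lambda>\<omega>. - X i \<omega>)"
  shows
    "(\<forall>k l. 1 \<le> k \<and> k < l \<and> l \<le> n \<and> stoch_le M (\<lambda>\<omega>. \<bar>X k \<omega>\<bar>) (\<lambda>\<omega>. \<bar>X l \<omega>\<bar>) \<longrightarrow>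
        stoch_le M (abs_max X ({1..n} - {l})) (abs_max X {1..n}) \<and>
        stoch_le M (abs_min X ({1..n} - {l})) (abs_min X {1..n}))
   \<and> (\<forall>k l. 1 \<le> k \<and> k < l \<and> l \<le> n \<and> stoch_lt M (\<lambda>\<omega>. \<bar>X k \<omega>\<bar>) (\<lambda>\<omega>. \<bar>X l \<omega>\<bar>) \<longrightarrow>
        stoch_lt M (abs_max X ({1..n} - {l})) (abs_max X {1..n}) \<and>
        stoch_lt M (abs_min X ({1..n} - {l})) (abs_min X {1..n}))
   \<and> ((\<forall>i. 1 \<le> i \<and> i < n \<longrightarrow> stoch_le M (\<lambda>\<omega>. \<bar>X i \<omega>\<bar>) (\<lambda>\<omega>. \<bar>X (i+1) \<omega>\<bar>)) \<longrightarrow>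
        SIAMX M X n \<and> SIAMN M X n)
   \<and> ((\<forall>i. 1 \<le> i \<and> i < n \<longrightarrow> stoch_lt M (\<lambda>\<omega>. \<bar>X i \<omega>\<bar>) (\<lambda>\<omega>. \<bar>X (i+1) \<omega>\<bar>)) \<longrightarrow>
        SSIAMX M X n \<and> SSIAMN M X n)"
proof -
  interpret prob_space M by fact
  have sy: "\<And>i. i \<in> J \<Longrightarrow> distr M borel (X i) = distr M borel (\<lambda>\<omega>. - X i \<omega>)"
    if "J \<subseteq> {1..n}" for J using symm that by blast
  have P1: "\<forall>k l. 1 \<le> k \<and> k < l \<and> l \<le> n \<and> stoch_le M (\<lambda>\<omega>. \<bar>X k \<omega>\<bar>) (\<lambda>\<omega>. \<bar>X l \<omega>\<bar>) \<longrightarrow>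
        stoch_le M (abs_max X ({1..n} - {l})) (abs_max X {1..n}) \<and>
        stoch_le M (abs_min X ({1..n} - {l})) (abs_min X {1..n})"
  proof (intro allI impI)
    fix k l assume a: "1 \<le> k \<and> k < l \<and> l \<le> n \<and> stoch_le M (\<lambda>\<omega>. \<bar>X k \<omega>\<bar>) (\<lambda>\<omega>. \<bar>X l \<omega>\<bar>)"
    then have b: "k \<in> {1..n}" "l \<in> {1..n}" "k \<noteq> l" by auto
    show "stoch_le M (abs_max X ({1..n} - {l})) (abs_max X {1..n}) \<and>
        stoch_le M (abs_min X ({1..n} - {l})) (abs_min X {1..n})"
      using core(1)[OF indep finite_atLeastAtMost b symm] a by blast
  qed
  have P2: "\<forall>k l. 1 \<le> k \<and> k < l \<and> l \<le> n \<and> stoch_lt M (\<lambda>\<omega>. \<bar>X k \<omega>\<bar>) (\<lambda>\<omega>. \<bar>X l \<omega>\<bar>) \<longrightarrow>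
        stoch_lt M (abs_max X ({1..n} - {l})) (abs_max X {1..n}) \<and>
        stoch_lt M (abs_min X ({1..n} - {l})) (abs_min X {1..n})"
  proof (intro allI impI)
    fix k l assume a: "1 \<le> k \<and> k < l \<and> l \<le> n \<and> stoch_lt M (\<lambda>\<omega>. \<bar>X k \<omega>\<bar>) (\<lambda>\<omega>. \<bar>X l \<omega>\<bar>)"
    then have b: "k \<in> {1..n}" "l \<in> {1..n}" "k \<noteq> l" by auto
    show "stoch_lt M (abs_max X ({1..n} - {l})) (abs_max X {1..n}) \<and>
        stoch_lt M (abs_min X ({1..n} - {l})) (abs_min X {1..n})"
      using core(2)[OF indep finite_atLeastAtMost b symm] a by blast
  qed
  have loc: "indep_vars (\<lambda>_. borel) X {1..l} \<and> l - 1 \<in> {1..l} \<and> l \<in> {1..l} \<and> l - 1 \<noteq> l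
      \<and> {1..l} - {l} = {1..l-1} \<and> l - 1 + 1 = l \<and> 1 \<le> l - 1 \<and> l - 1 < n" if "l \<in> {2..n}" for l
    using that indep_vars_subset[OF indep, of "{1..l}"] by auto
  have P3: "(\<forall>i. 1 \<le> i \<and> i < n \<longrightarrow> stoch_le M (\<lambda>\<omega>. \<bar>X i \<omega>\<bar>) (\<lambda>\<omega>. \<bar>X (i+1) \<omega>\<bar>)) \<longrightarrow>
        SIAMX M X n \<and> SIAMN M X n"
  proof (intro impI)
    assume h: "\<forall>i. 1 \<le> i \<and> i < n \<longrightarrow> stoch_le M (\<lambda>\<omega>. \<bar>X i \<omega>\<bar>) (\<lambda>\<omega>. \<bar>X (i+1) \<omega>\<bar>)"
    have "stoch_le M (abs_max X {1..l-1}) (abs_max X {1..l}) \<and> stoch_le M (abs_min X {1..l-1}) (abs_min X {1..l})"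
      if l: "l \<in> {2..n}" for l
    proof -
      have "stoch_le M (\<lambda>\<omega>. \<bar>X (l-1) \<omega>\<bar>) (\<lambda>\<omega>. \<bar>X l \<omega>\<bar>)" using h loc[OF l] by metis
      with core(1)[of X "{1..l}" "l-1" l] loc[OF l] sy[of "{1..l}"] l show ?thesis by auto
    qed
    then show "SIAMX M X n \<and> SIAMN M X n" unfolding SIAMX_def SIAMN_def by blast
  qed
  have P4: "(\<forall>i. 1 \<le> i \<and> i < n \<longrightarrow> stoch_lt M (\<lambda>\<omega>. \<bar>X i \<omega>\<bar>) (\<lambda>\<omega>. \<bar>X (i+1) \<omega>\<bar>)) \<longrightarrow>
        SSIAMX M X n \<and> SSIAMN M X n"
  proof (intro impI)
    assume h: "\<forall>i. 1 \<le> i \<and> i < n \<longrightarrow> stoch_lt M (\<lambda>\<omega>. \<bar>X i \<omega>\<bar>) (\<lambda>\<omega>. \<bar>X (i+1) \<omega>\<bar>)"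
    have "stoch_lt M (abs_max X {1..l-1}) (abs_max X {1..l}) \<and> stoch_lt M (abs_min X {1..l-1}) (abs_min X {1..l})"
      if l: "l \<in> {2..n}" for l
    proof -
      have "stoch_lt M (\<lambda>\<omega>. \<bar>X (l-1) \<omega>\<bar>) (\<lambda>\<omega>. \<bar>X l \<omega>\<bar>)" using h loc[OF l] by metis
      with core(2)[of X "{1..l}" "l-1" l] loc[OF l] sy[of "{1..l}"] l show ?thesis by auto
    qed
    then show "SSIAMX M X n \<and> SSIAMN M X n" unfolding SSIAMX_def SSIAMN_def by blast
  qed
  show ?thesis using P1 P2 P3 P4 by blast
qed

end
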